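(* In the setting below, suppose $\max_{g\in G_-}|\delta(g)|\ge E_k-\lfloor E_k\rfloor_2+2$. Then there exists $g_{k+1}\in\mathrm{Co}_0$ such that $S_{k+1}=g_{k+1}S\setminus U_k$ satisfies $|S_{k+1}|\ge |S|+2-\lfloor E_k\rfloor_2$, and $S_1,\dots,S_{k+1}$ are pairwise disjoint.
   Context: Let $\Lambda_{24}$ be the Leech lattice scaled so minimal vectors have length $2$, $\mathcal C$ its $196560$ minimal vectors, and $\mathrm{Co}_0$ the finite group of linear isometries of $\mathbb{R}^{24}$ mapping $\Lambda_{24}$ onto itself (acting transitively on $\mathcal C$). Fix an antipodal ($S=-S$) set $S\subseteq\mathcal C$ with $\langle x,y\rangle\le1$ for distinct $x,y\in S$. Let $k\ge1$, $S_1=S$, $g_1=\mathrm{id}$, and for $2\le j\le k$, $S_j=g_jS\setminus(S_1\cup\dots\cup S_{j-1})$ for some $g_j\in\mathrm{Co}_0$, with $|S_j|\ge|S|\bigl(1-\sum_{i<j}|S_i|/|\mathcal C|\bigr)$. Put $U_k=S_1\cup\dots\cup S_k$, $E_k=\mathbb{E}_g|gS\cap U_k|$ ($g$ uniform in $\mathrm{Co}_0$). $\lfloor x\rfloor_2$ is the greatest even integer $\le x$. $\delta(g)=|gS\cap U_k|-E_k$, $G_-=\{g:\delta(g)<0\}$. *)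

theory Defs
  imports "HOL-Analysis.Analysis"
begin

type_synonym vec24 = "real ^ 24"

definition coord :: "vec24 \<Rightarrow> nat \<Rightarrow> real" where
  "coord x n = x $ (of_nat n :: 24)"

text \<open>Generator matrix [I | B] of the extended binary Golay code
  (extended quadratic residue code of length 24).\<close>
definition golay_gen_rows :: "nat list list" where
  "golay_gen_rows = [
    [1, 0, 0, 0, 0, 0, 0, 0, 0, 0, 0, 0, 0, 1, 1, 1, 1, 1, 1, 1, 1, 1, 1, 1],
    [0, 1, 0, 0, 0, 0, 0, 0, 0, 0, 0, 0, 1, 1, 1, 0, 1, 1, 1, 0, 0, 0, 1, 0],
    [0, 0, 1, 0, 0, 0, 0, 0, 0, 0, 0, 0, 1, 0, 1, 1, 0, 1, 1, 1, 0, 0, 0, 1],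
    [0, 0, 0, 1, 0, 0, 0, 0, 0, 0, 0, 0, 1, 1, 0, 1, 1, 0, 1, 1, 1, 0, 0, 0],
    [0, 0, 0, 0, 1, 0, 0, 0, 0, 0, 0, 0, 1, 0, 1, 0, 1, 1, 0, 1, 1, 1, 0, 0],
    [0, 0, 0, 0, 0, 1, 0, 0, 0, 0, 0, 0, 1, 0, 0, 1, 0, 1, 1, 0, 1, 1, 1, 0],
    [0, 0, 0, 0, 0, 0, 1, 0, 0, 0, 0, 0, 1, 0, 0, 0, 1, 0, 1, 1, 0, 1, 1, 1],
    [0, 0, 0, 0, 0, 0, 0, 1, 0, 0, 0, 0, 1, 1, 0, 0, 0, 1, 0, 1, 1, 0, 1, 1],
    [0, 0, 0, 0, 0, 0, 0, 0, 1, 0, 0, 0, 1, 1, 1, 0, 0, 0, 1, 0, 1, 1, 0, 1],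
    [0, 0, 0, 0, 0, 0, 0, 0, 0, 1, 0, 0, 1, 1, 1, 1, 0, 0, 0, 1, 0, 1, 1, 0],
    [0, 0, 0, 0, 0, 0, 0, 0, 0, 0, 1, 0, 1, 0, 1, 1, 1, 0, 0, 0, 1, 0, 1, 1],
    [0, 0, 0, 0, 0, 0, 0, 0, 0, 0, 0, 1, 1, 1, 0, 1, 1, 1, 0, 0, 0, 1, 0, 1]
  ]"

text \<open>Golay code, as the set of supports (subsets of {0..<24}) of codewords:
  all GF(2)-linear combinations of the generator rows.\<close>
definition golay_code :: "nat set set" where
  "golay_code = {{n. n < 24 \<and> odd (card {j \<in> c. golay_gen_rows ! j ! n = 1})} | c. c \<subseteq> {..<12}}"

text \<open>Leech lattice (Conway--Sloane, SPLAG Ch.4 Sec.11), scaled by 1/sqrt 8 so that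
  minimal vectors have squared norm 4, i.e. length 2.\<close>
definition leech :: "vec24 set" where
  "leech = {x. \<exists>z :: nat \<Rightarrow> int. \<exists>m :: int. m \<in> {0, 1} \<and>
      (\<forall>n<24. coord x n = real_of_int (z n) / sqrt 8) \<and>
      (\<forall>n<24. z n mod 2 = m) \<and>
      (\<Sum>n<24. z n) mod 8 = 4 * m \<and>
      (\<forall>\<nu>::int \<in> {0..3}. {n. n < 24 \<and> z n mod 4 = \<nu>} \<in> golay_code)}"

definition leech_min :: "vec24 set" where
  "leech_min = {x \<in> leech. norm x = 2}"

definition Co0 :: "(vec24 \<Rightarrow> vec24) set" where
  "Co0 = {g. linear g \<and> (\<forall>x. norm (g x) = norm x) \<and> g ` leech = leech}"

definition floor_even :: "real \<Rightarrow> int" where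
  "floor_even x = 2 * \<lfloor>x / 2\<rfloor>"

definition avg_overlap :: "vec24 set \<Rightarrow> vec24 set \<Rightarrow> real" where
  "avg_overlap S U = (\<Sum>g\<in>Co0. real (card (g ` S \<inter> U))) / real (card Co0)"

end

theory Submission
  imports Defs
begin

theorem lemma4p11:
  fixes S :: "vec24 set" and k :: nat
    and Ss :: "nat \<Rightarrow> vec24 set" and gs :: "nat \<Rightarrow> (vec24 \<Rightarrow> vec24)"
  assumes S_sub: "S \<subseteq> leech_min"
    and S_antipodal: "uminus ` S = S"
    and S_inner: "\<forall>x\<in>S. \<forall>y\<in>S. x \<noteq> y \<longrightarrow> x \<bullet> y \<le> 1"
    and k_pos: "1 \<le> k"
    and S1: "Ss 1 = S" and g1: "gs 1 = id"
    and gs_Co0: "\<forall>j\<in>{2..k}. gs j \<in> Co0"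
    and Ss_def: "\<forall>j\<in>{2..k}. Ss j = gs j ` S - (\<Union>i\<in>{1..<j}. Ss i)"
    and Ss_size: "\<forall>j\<in>{2..k}. real (card (Ss j)) \<ge>
        real (card S) * (1 - (\<Sum>i\<in>{1..<j}. real (card (Ss i))) / real (card leech_min))"
    and hyp: "let U = (\<Union>i\<in>{1..k}. Ss i); E = avg_overlap S U;
               \<delta> = (\<lambda>g. real (card (g ` S \<inter> U)) - E);
               Gm = {g\<in>Co0. \<delta> g < 0}
             in Gm \<noteq> {} \<and> Max ((\<lambda>g. \<bar>\<delta> g\<bar>) ` Gm) \<ge> E - real_of_int (floor_even E) + 2"
  shows "let U = (\<Union>i\<in>{1..k}. Ss i); E = avg_overlap S U
         in \<exists>g\<in>Co0. real (card (g ` S - U)) \<ge> real (card S) + 2 - real_of_int (floor_even E)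
              \<and> (\<forall>i\<in>{1..k+1}. \<forall>j\<in>{1..k+1}. i \<noteq> j \<longrightarrow>
                   (if i = k+1 then g ` S - U else Ss i) \<inter> (if j = k+1 then g ` S - U else Ss j) = {})"
proof -
  define U where "U = (\<Union>i\<in>{1..k}. Ss i)"
  define E where "E = avg_overlap S U"
  define \<delta> where "\<delta> = (\<lambda>g. real (card (g ` S \<inter> U)) - E)"
  define Gm where "Gm = {g\<in>Co0. \<delta> g < 0}"
  have H0: "Gm \<noteq> {} \<and> Max ((\<lambda>g. \<bar>\<delta> g\<bar>) ` Gm) \<ge> E - real_of_int (floor_even E) + 2"
    using hyp unfolding Let_def U_def[symmetric] E_def[symmetric] \<delta>_def Gm_def .
  have H: "Gm \<noteq> {}" "Max ((\<lambda>g. \<bar>\<delta> g\<bar>) ` Gm) \<ge> E - real_of_int (floor_even E) + 2"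
    using H0 by blast+
  have finCo: "finite Co0"
  proof (rule ccontr)
    assume "infinite Co0"
    then have "E = 0" unfolding E_def avg_overlap_def by simp
    then have "Gm = {}" unfolding Gm_def \<delta>_def by simp
    with H show False by simp
  qed
  have finGm: "finite Gm" using finCo unfolding Gm_def by (rule finite_subset[rotated]) blast
  have Min: "Max ((\<lambda>g. \<bar>\<delta> g\<bar>) ` Gm) \<in> (\<lambda>g. \<bar>\<delta> g\<bar>) ` Gm"
    by (rule Max_in) (use finGm H(1) in blast)+
  then obtain g where gG: "g \<in> Gm" and gmax: "Max ((\<lambda>g. \<bar>\<delta> g\<bar>) ` Gm) = \<bar>\<delta> g\<bar>"
    by (rule imageE) blast
  have gC: "g \<in> Co0" and neg: "\<delta> g < 0" using gG unfolding Gm_def by blast+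
  have c1: "real (card (g ` S \<inter> U)) \<le> real_of_int (floor_even E) - 2"
  proof -
    have "\<bar>\<delta> g\<bar> = - \<delta> g" using neg by simp
    then have "- \<delta> g \<ge> E - real_of_int (floor_even E) + 2" using H(2) gmax by linarith
    then show ?thesis unfolding \<delta>_def by simp
  qed
  have inj: "inj_on g S"
  proof (rule inj_onI)
    fix x y assume "x \<in> S" "y \<in> S" "g x = g y"
    have lin: "linear g" and np: "\<And>z. norm (g z) = norm z" using gC unfolding Co0_def by auto
    have "g (x - y) = 0" using \<open>g x = g y\<close> linear_diff[OF lin] by simp
    then have "norm (x - y) = 0" using np[of "x - y"] by simp
    then show "x = y" by simp
  qed
  have cardeq: "card (g ` S) = card S" using card_image[OF inj] .
  have c2: "real (card (g ` S - U)) + real (card (g ` S \<inter> U)) \<ge> real (card S)"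
  proof (cases "finite (g ` S)")
    case True
    have "card (g ` S) = card (g ` S - U) + card (g ` S \<inter> U)"
      using card_Int_Diff[OF True, of U] by simp
    then show ?thesis using cardeq by simp
  next
    case False
    then have "card (g ` S) = 0" by simp
    then show ?thesis using cardeq by simp
  qed
  have disj: "\<forall>i\<in>{1..k+1}. \<forall>j\<in>{1..k+1}. i \<noteq> j \<longrightarrow>
                   (if i = k+1 then g ` S - U else Ss i) \<inter> (if j = k+1 then g ` S - U else Ss j) = {}"
  proof (intro ballI impI)
    fix i j assume i: "i \<in> {1..k+1}" and j: "j \<in> {1..k+1}" and ij: "i \<noteq> j"
    have A: "Ss a \<inter> Ss b = {}" if "a \<in> {1..k}" "b \<in> {1..k}" "a < b" for a b
    proof -
      have "b \<in> {2..k}" using that by auto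
      then have "Ss b = gs b ` S - (\<Union>i\<in>{1..<b}. Ss i)" using Ss_def by blast
      moreover have "a \<in> {1..<b}" using that by auto
      ultimately show ?thesis by blast
    qed
    show "(if i = k+1 then g ` S - U else Ss i) \<inter> (if j = k+1 then g ` S - U else Ss j) = {}"
    proof (cases "i = k+1")
      case True
      then have "j \<in> {1..k}" using i j ij by auto
      then show ?thesis using True ij unfolding U_def by auto
    next
      case False
      then have ii: "i \<in> {1..k}" using i by auto
      show ?thesis
      proof (cases "j = k+1")
        case True
        then show ?thesis using False ii unfolding U_def by auto
      next
        case False2: False
        then have "j \<in> {1..k}" using j by auto
        then show ?thesis using A[of i j] A[of j i] ii ij False False2
          by (cases "i < j") (auto simp: Int_commute)
      qed
    qed
  qed
  have "real (card (g ` S - U)) \<ge> real (card S) + 2 - real_of_int (floor_even E)"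
    using c1 c2 by linarith
  then have fin: "real (card (g ` S - U)) \<ge> real (card S) + 2 - real_of_int (floor_even E) \<and>
      (\<forall>i\<in>{1..k+1}. \<forall>j\<in>{1..k+1}. i \<noteq> j \<longrightarrow>
                   (if i = k+1 then g ` S - U else Ss i) \<inter> (if j = k+1 then g ` S - U else Ss j) = {})"
    using disj by (rule conjI)
  show ?thesis unfolding Let_def U_def[symmetric] E_def[symmetric] 
  proof (rule bexI[where x=g])
    show "g \<in> Co0" by (rule gC)
  qed (rule fin)
qed

end
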